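(* Consider the system $x_{k+1}=Ax_k+Bu_k$ with constraint sets $\mathcal{X}=\{x\mid C_xx\le c_x\}$, $\mathcal{U}=\{u\mid C_uu\le c_u\}$ (with $0\in\operatorname{int}\mathcal{X}$, $0\in\operatorname{int}\mathcal{U}$) and equilibrium at the origin, controlled by a ReLU network $u_k=\mathcal{N}(x_k;\theta)$ with $L$ hidden layers, i.e. $x_{k+1}=f_{\text{cl}}(x_k)=Ax_k+B\mathcal{N}(x_k;\theta)$. Let $\Gamma_{\text{eq}}=G(0)$, $\mathcal{R}_{\text{eq}}=\{x\mid G(x)=\Gamma_{\text{eq}}\}$, and let $W_{\Gamma_{\text{eq}},L},b_{\Gamma_{\text{eq}},L}$ be as defined in the context. Suppose $W_{L+1}b_{\Gamma_{\text{eq}},L}+b_{L+1}=0$ and every eigenvalue of $A+BW_{L+1}W_{\Gamma_{\text{eq}},L}$ has modulus strictly less than $1$. Let $\mathcal{R}_K$ be the set of initial states $x_0$ for which the linear feedback $u_k=W_{L+1}W_{\Gamma_{\text{eq}},L}x_k$ applied to the system produces a trajectory that satisfies $x_k\in\mathcal{X}$ and $u_k\in\mathcal{U}$ for all $k\ge0$ and converges to the origin. Let $\mathcal{R}_{\text{as}}$ be an admissible control-invariant set for the closed loop with $\mathcal{R}_{\text{as}}\subseteq\mathcal{R}_{\text{eq}}\cap\mathcal{R}_K$. Then the neural network controller is asymptotically stabilizing for all $x\in\mathcal{R}_{\text{as}}$: every closed-loop trajectory starting in $\mathcal{R}_{\text{as}}$ satisfies the constraints and converges asymptotically to the origin.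
   Context: A ReLU network is $\mathcal{N}(x;\theta)=W_{L+1}\xi_L+b_{L+1}$ with $\xi_0=x$, $\xi_l=\max(0,W_l\xi_{l-1}+b_l)$ elementwise for $l=1,\dots,L$, where $W_l\in\mathbb{R}^{n_l\times n_{l-1}}$ ($n_0=n_x$), $b_l\in\mathbb{R}^{n_l}$, $W_{L+1}\in\mathbb{R}^{n_u\times n_L}$, $b_{L+1}\in\mathbb{R}^{n_u}$. The activation pattern of $x$ is $G(x)=(\gamma_1(x),\dots,\gamma_L(x))$ with $\gamma_l(x)\in\{0,1\}^{n_l}$, $\gamma_l(x)^{(i)}=1$ iff $W_l^{(i)}\xi_{l-1}+b_l^{(i)}\ge0$. For a fixed pattern $\Gamma=(\gamma_1,\dots,\gamma_L)$ define $\eta_0=x$, $\eta_l=\gamma_l\odot(W_l\eta_{l-1}+b_l)$ ($\odot$ elementwise product); then $\eta_L=W_{\Gamma,L}x+b_{\Gamma,L}$ for a matrix $W_{\Gamma,L}\in\mathbb{R}^{n_L\times n_x}$ and vector $b_{\Gamma,L}\in\mathbb{R}^{n_L}$ determined by $\Gamma$ and $\theta$. In particular, for $x\in\mathcal{R}_{\text{eq}}$, $\mathcal{N}(x;\theta)=W_{L+1}(W_{\Gamma_{\text{eq}},L}x+b_{\Gamma_{\text{eq}},L})+b_{L+1}$. A set $\mathcal{C}$ is an admissible control-invariant set for the closed loop if $\mathcal{N}(x;\theta)\in\mathcal{U}$ for all $x\in\mathcal{C}$ and $f_{\text{cl}}(\mathcal{C})\subseteq\mathcal{C}$. *)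

theory Defs
  imports "Jordan_Normal_Form.Char_Poly"
begin

text \<open>A ReLU network with L hidden layers is given by a list of hidden layers
[(W_1,b_1),...,(W_L,b_L)] and an output layer (W_{L+1}, b_{L+1}).
Activation patterns are lists of bool vectors (True = active, i.e. the paper's 1).\<close>

definition relu :: "real vec \<Rightarrow> real vec" where
  "relu z = map_vec (\<lambda>t. max 0 t) z"

fun hidden_out :: "(real mat \<times> real vec) list \<Rightarrow> real vec \<Rightarrow> real vec" where
  "hidden_out [] x = x"
| "hidden_out ((W, b) # ls) x = hidden_out ls (relu (W *\<^sub>v x + b))"

definition relu_net :: "(real mat \<times> real vec) list \<Rightarrow> real mat \<Rightarrow> real vec \<Rightarrow> real vec \<Rightarrow> real vec" where
  "relu_net ls WL1 bL1 x = WL1 *\<^sub>v hidden_out ls x + bL1"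

fun act_pattern :: "(real mat \<times> real vec) list \<Rightarrow> real vec \<Rightarrow> bool vec list" where
  "act_pattern [] x = []"
| "act_pattern ((W, b) # ls) x =
     (let z = W *\<^sub>v x + b in vec (dim_vec z) (\<lambda>i. z $ i \<ge> 0) # act_pattern ls (relu z))"

text \<open>diagonal 0/1 matrix of a pattern vector gamma (so that gamma \<odot> z = pat_diag gamma *v z)\<close>
definition pat_diag :: "bool vec \<Rightarrow> real mat" where
  "pat_diag g = mat (dim_vec g) (dim_vec g) (\<lambda>(i, j). if i = j \<and> g $ i then 1 else 0)"

text \<open>(W_{Gamma,l}, b_{Gamma,l}) for a fixed pattern, from
eta_0 = x, eta_l = gamma_l \<odot> (W_l eta_{l-1} + b_l); the recursion processes
the layers from the first one, starting with (W_{Gamma,0}, b_{Gamma,0}) = (I, 0).\<close>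
fun pat_affine_aux :: "(real mat \<times> real vec) list \<Rightarrow> bool vec list \<Rightarrow> real mat \<times> real vec \<Rightarrow> real mat \<times> real vec" where
  "pat_affine_aux ((W, b) # ls) (g # gs) (M, c) =
     pat_affine_aux ls gs (pat_diag g * (W * M), pat_diag g *\<^sub>v (W *\<^sub>v c + b))"
| "pat_affine_aux _ _ Mc = Mc"

definition pat_affine :: "nat \<Rightarrow> (real mat \<times> real vec) list \<Rightarrow> bool vec list \<Rightarrow> real mat \<times> real vec" where
  "pat_affine nx ls G = pat_affine_aux ls G (1\<^sub>m nx, 0\<^sub>v nx)"

definition polyhedron :: "nat \<Rightarrow> real mat \<Rightarrow> real vec \<Rightarrow> real vec set" where
  "polyhedron n C c = {v. dim_vec v = n \<and> C *\<^sub>v v \<le> c}"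

definition zero_interior :: "nat \<Rightarrow> real vec set \<Rightarrow> bool" where
  "zero_interior n S \<longleftrightarrow> (\<exists>e>0. \<forall>v. dim_vec v = n \<and> (\<Sum>i<n. (v $ i)\<^sup>2) < e\<^sup>2 \<longrightarrow> v \<in> S)"

text \<open>convergence of a sequence in R^n to the origin (componentwise = Euclidean)\<close>
definition conv_zero :: "nat \<Rightarrow> (nat \<Rightarrow> real vec) \<Rightarrow> bool" where
  "conv_zero n xs \<longleftrightarrow> (\<forall>i<n. (\<lambda>k. xs k $ i) \<longlonglongrightarrow> 0)"

definition closed_loop :: "real mat \<Rightarrow> real mat \<Rightarrow> (real mat \<times> real vec) list \<Rightarrow> real mat \<Rightarrow> real vec \<Rightarrow> real vec \<Rightarrow> real vec" where
  "closed_loop A B ls WL1 bL1 x = A *\<^sub>v x + B *\<^sub>v relu_net ls WL1 bL1 x"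

definition lin_region :: "nat \<Rightarrow> real mat \<Rightarrow> real mat \<Rightarrow> real mat \<Rightarrow> real vec set \<Rightarrow> real vec set \<Rightarrow> real vec set" where
  "lin_region nx A B K X U =
     {x0. dim_vec x0 = nx \<and>
        (let xs = (\<lambda>k. ((\<lambda>x. A *\<^sub>v x + B *\<^sub>v (K *\<^sub>v x)) ^^ k) x0) in
          (\<forall>k. xs k \<in> X \<and> K *\<^sub>v xs k \<in> U) \<and> conv_zero nx xs)}"

definition admissible_ci :: "(real vec \<Rightarrow> real vec) \<Rightarrow> (real vec \<Rightarrow> real vec) \<Rightarrow> real vec set \<Rightarrow> real vec set \<Rightarrow> bool" where
  "admissible_ci f ctrl U C \<longleftrightarrow> (\<forall>x\<in>C. ctrl x \<in> U) \<and> f ` C \<subseteq> C"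

fun layers_wf :: "nat \<Rightarrow> (real mat \<times> real vec) list \<Rightarrow> nat \<Rightarrow> bool" where
  "layers_wf n [] m = (m = n)"
| "layers_wf n ((W, b) # ls) m = (dim_col W = n \<and> dim_vec b = dim_row W \<and> layers_wf (dim_row W) ls m)"

definition net_wf :: "nat \<Rightarrow> nat \<Rightarrow> (real mat \<times> real vec) list \<Rightarrow> real mat \<Rightarrow> real vec \<Rightarrow> bool" where
  "net_wf nx nu ls WL1 bL1 \<longleftrightarrow> layers_wf nx ls (dim_col WL1) \<and> dim_row WL1 = nu \<and> dim_vec bL1 = nu"

end

theory Submission
  imports Defs
begin


lemma relu_pat: "relu z = pat_diag (vec (dim_vec z) (\<lambda>i. z $ i \<ge> 0)) *\<^sub>v z"
proof (rule eq_vecI)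
  show "dim_vec (relu z) = dim_vec (pat_diag (vec (dim_vec z) (\<lambda>i. z $ i \<ge> 0)) *\<^sub>v z)"
    by (simp add: relu_def pat_diag_def)
next
  fix i assume "i < dim_vec (pat_diag (vec (dim_vec z) (\<lambda>i. z $ i \<ge> 0)) *\<^sub>v z)"
  then have i: "i < dim_vec z" by (simp add: pat_diag_def)
  have "(pat_diag (vec (dim_vec z) (\<lambda>i. z $ i \<ge> 0)) *\<^sub>v z) $ i
      = (\<Sum>j<dim_vec z. (if i = j \<and> z $ i \<ge> 0 then 1 else 0) * z $ j)"
    using i by (simp add: pat_diag_def scalar_prod_def row_def atLeast0LessThan)
  also have "\<dots> = (\<Sum>j<dim_vec z. if j = i then (if z $ i \<ge> 0 then z $ i else 0) else 0)"
    by (rule sum.cong) auto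
  also have "\<dots> = max 0 (z $ i)" using i by (simp add: max_def)
  finally show "relu z $ i = (pat_diag (vec (dim_vec z) (\<lambda>i. z $ i \<ge> 0)) *\<^sub>v z) $ i"
    using i by (simp add: relu_def)
qed

lemma pat_diag_carrier: "pat_diag g \<in> carrier_mat (dim_vec g) (dim_vec g)"
  by (simp add: pat_diag_def)

lemma key:
  assumes "layers_wf n ls m" "M \<in> carrier_mat n nx" "c \<in> carrier_vec n" "x \<in> carrier_vec nx"
  shows "hidden_out ls (M *\<^sub>v x + c) =
           fst (pat_affine_aux ls (act_pattern ls (M *\<^sub>v x + c)) (M, c)) *\<^sub>v x
         + snd (pat_affine_aux ls (act_pattern ls (M *\<^sub>v x + c)) (M, c))
       \<and> fst (pat_affine_aux ls (act_pattern ls (M *\<^sub>v x + c)) (M, c)) \<in> carrier_mat m nx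
       \<and> snd (pat_affine_aux ls (act_pattern ls (M *\<^sub>v x + c)) (M, c)) \<in> carrier_vec m"
  using assms
proof (induction ls arbitrary: n M c)
  case Nil
  then show ?case by simp
next
  case (Cons l ls)
  obtain W b where l: "l = (W, b)" by force
  define z where "z = W *\<^sub>v (M *\<^sub>v x + c) + b"
  define g where "g = vec (dim_vec z) (\<lambda>i. z $ i \<ge> 0)"
  have h: "dim_col W = n" "dim_vec b = dim_row W" "layers_wf (dim_row W) ls m"
    using Cons.prems(1) unfolding l by simp_all
  have W: "W \<in> carrier_mat (dim_row W) n" using h(1) by (intro carrier_matI) simp_all
  have b: "b \<in> carrier_vec (dim_row W)" using h(2) by (intro carrier_vecI)
  note wf = h(3)
  have dz: "dim_vec z = dim_row W" unfolding z_def using h(2) by simp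
  have P: "pat_diag g \<in> carrier_mat (dim_row W) (dim_row W)"
    using pat_diag_carrier[of g] by (simp add: g_def dz)
  define M' where "M' = pat_diag g * (W * M)"
  define c' where "c' = pat_diag g *\<^sub>v (W *\<^sub>v c + b)"
  have M': "M' \<in> carrier_mat (dim_row W) nx" unfolding M'_def
    by (rule mult_carrier_mat[OF P mult_carrier_mat[OF W Cons.prems(2)]])
  have c': "c' \<in> carrier_vec (dim_row W)" unfolding c'_def
    by (rule mult_mat_vec_carrier[OF P add_carrier_vec[OF mult_mat_vec_carrier[OF W Cons.prems(3)] b]])
  have Mx: "M *\<^sub>v x \<in> carrier_vec n" by (rule mult_mat_vec_carrier[OF Cons.prems(2,4)])
  have WMx: "W *\<^sub>v (M *\<^sub>v x) \<in> carrier_vec (dim_row W)" by (rule mult_mat_vec_carrier[OF W Mx])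
  have Wc: "W *\<^sub>v c \<in> carrier_vec (dim_row W)" by (rule mult_mat_vec_carrier[OF W Cons.prems(3)])
  have Wcb: "W *\<^sub>v c + b \<in> carrier_vec (dim_row W)" by (rule add_carrier_vec[OF Wc b])
  have e1: "M' *\<^sub>v x = pat_diag g *\<^sub>v (W *\<^sub>v (M *\<^sub>v x))"
    unfolding M'_def assoc_mult_mat_vec[OF P mult_carrier_mat[OF W Cons.prems(2)] Cons.prems(4)]
      assoc_mult_mat_vec[OF W Cons.prems(2) Cons.prems(4)] ..
  have e2: "pat_diag g *\<^sub>v (W *\<^sub>v (M *\<^sub>v x)) + pat_diag g *\<^sub>v (W *\<^sub>v c + b)
        = pat_diag g *\<^sub>v (W *\<^sub>v (M *\<^sub>v x) + (W *\<^sub>v c + b))"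
    by (rule mult_add_distrib_mat_vec[OF P WMx Wcb, symmetric])
  have e3: "z = W *\<^sub>v (M *\<^sub>v x) + (W *\<^sub>v c + b)"
    unfolding z_def mult_add_distrib_mat_vec[OF W Mx Cons.prems(3)] assoc_add_vec[OF WMx Wc b] ..
  have e4: "relu z = pat_diag g *\<^sub>v z" unfolding g_def by (rule relu_pat)
  have y': "relu z = M' *\<^sub>v x + c'"
    unfolding e4 e1 c'_def e2 e3[symmetric] ..
  have IH: "hidden_out ls (M' *\<^sub>v x + c') =
           fst (pat_affine_aux ls (act_pattern ls (M' *\<^sub>v x + c')) (M', c')) *\<^sub>v x
         + snd (pat_affine_aux ls (act_pattern ls (M' *\<^sub>v x + c')) (M', c'))
       \<and> fst (pat_affine_aux ls (act_pattern ls (M' *\<^sub>v x + c')) (M', c')) \<in> carrier_mat m nx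
       \<and> snd (pat_affine_aux ls (act_pattern ls (M' *\<^sub>v x + c')) (M', c')) \<in> carrier_vec m"
    using Cons.IH[OF wf M' c' Cons.prems(4)] .
  have A1: "act_pattern ((W, b) # ls) (M *\<^sub>v x + c) = g # act_pattern ls (relu z)"
    by (simp add: Let_def z_def g_def)
  have A2: "hidden_out ((W, b) # ls) (M *\<^sub>v x + c) = hidden_out ls (relu z)"
    by (simp add: z_def)
  have A3: "pat_affine_aux ((W, b) # ls) (g # gs) (M, c) = pat_affine_aux ls gs (M', c')" for gs
    by (simp add: M'_def c'_def)
  show ?case using IH unfolding l A1 A2 A3 y' .
qed

theorem lemma2:
  fixes nx nu :: nat
    and A B Cx Cu :: "real mat" and cx cu :: "real vec"
    and ls :: "(real mat \<times> real vec) list" and WL1 :: "real mat" and bL1 :: "real vec"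
    and R_as :: "real vec set"
  assumes A_dim: "A \<in> carrier_mat nx nx"
    and B_dim: "B \<in> carrier_mat nx nu"
    and Cx_dim: "dim_col Cx = nx" and cx_dim: "dim_vec cx = dim_row Cx"
    and Cu_dim: "dim_col Cu = nu" and cu_dim: "dim_vec cu = dim_row Cu"
    and X_int: "zero_interior nx (polyhedron nx Cx cx)"
    and U_int: "zero_interior nu (polyhedron nu Cu cu)"
    and net: "net_wf nx nu ls WL1 bL1"
    and eq_bias: "WL1 *\<^sub>v snd (pat_affine nx ls (act_pattern ls (0\<^sub>v nx))) + bL1 = 0\<^sub>v nu"
    and schur: "\<And>ev. eigenvalue (map_mat complex_of_real
                   (A + B * (WL1 * fst (pat_affine nx ls (act_pattern ls (0\<^sub>v nx)))))) ev
                 \<Longrightarrow> cmod ev < 1"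
    and inv: "admissible_ci (closed_loop A B ls WL1 bL1) (relu_net ls WL1 bL1)
                (polyhedron nu Cu cu) R_as"
    and sub: "R_as \<subseteq> {x. dim_vec x = nx \<and> act_pattern ls x = act_pattern ls (0\<^sub>v nx)}
                 \<inter> lin_region nx A B (WL1 * fst (pat_affine nx ls (act_pattern ls (0\<^sub>v nx))))
                     (polyhedron nx Cx cx) (polyhedron nu Cu cu)"
  shows "\<forall>x0\<in>R_as. \<forall>k.
           ((closed_loop A B ls WL1 bL1 ^^ k) x0) \<in> polyhedron nx Cx cx
         \<and> relu_net ls WL1 bL1 ((closed_loop A B ls WL1 bL1 ^^ k) x0) \<in> polyhedron nu Cu cu
         \<and> conv_zero nx (\<lambda>k. (closed_loop A B ls WL1 bL1 ^^ k) x0)"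
  
proof -
  define G where "G = act_pattern ls (0\<^sub>v nx)"
  define W where "W = fst (pat_affine nx ls G)"
  define bb where "bb = snd (pat_affine nx ls G)"
  define K where "K = WL1 * W"
  define f where "f = closed_loop A B ls WL1 bL1"
  define lin where "lin = (\<lambda>x. A *\<^sub>v x + B *\<^sub>v (K *\<^sub>v x))"
  have lw: "layers_wf nx ls (dim_col WL1)" and dWL: "dim_row WL1 = nu" and dbL: "dim_vec bL1 = nu"
    using net unfolding net_wf_def by blast+
  have WL1: "WL1 \<in> carrier_mat nu (dim_col WL1)" using dWL by (intro carrier_matI) simp_all
  have bL1: "bL1 \<in> carrier_vec nu" using dbL by (intro carrier_vecI)
  have pa: "W = fst (pat_affine_aux ls G (1\<^sub>m nx, 0\<^sub>v nx))"
           "bb = snd (pat_affine_aux ls G (1\<^sub>m nx, 0\<^sub>v nx))"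
    unfolding W_def bb_def pat_affine_def by (rule refl)+
  have eqb: "WL1 *\<^sub>v bb + bL1 = 0\<^sub>v nu" using eq_bias unfolding bb_def G_def .
  have fx: "f x = lin x" if x: "x \<in> R_as" for x
  proof -
    have xx: "dim_vec x = nx \<and> act_pattern ls x = act_pattern ls (0\<^sub>v nx)"
      using sub x by blast
    have dx: "x \<in> carrier_vec nx" using xx by (intro carrier_vecI) blast
    have px: "act_pattern ls x = G" using xx unfolding G_def by blast
    have xe: "1\<^sub>m nx *\<^sub>v x + 0\<^sub>v nx = x"
      unfolding one_mult_mat_vec[OF dx] right_zero_vec[OF dx] ..
    note k = key[OF lw one_carrier_mat zero_carrier_vec dx, unfolded xe px, folded pa]
    have hW: "hidden_out ls x = W *\<^sub>v x + bb" and Wc: "W \<in> carrier_mat (dim_col WL1) nx"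
      and bc: "bb \<in> carrier_vec (dim_col WL1)"
      using k by blast+
    have Wx: "W *\<^sub>v x \<in> carrier_vec (dim_col WL1)" by (rule mult_mat_vec_carrier[OF Wc dx])
    have WWx: "WL1 *\<^sub>v (W *\<^sub>v x) \<in> carrier_vec nu" by (rule mult_mat_vec_carrier[OF WL1 Wx])
    have WLb: "WL1 *\<^sub>v bb \<in> carrier_vec nu" by (rule mult_mat_vec_carrier[OF WL1 bc])
    have "relu_net ls WL1 bL1 x = (WL1 *\<^sub>v (W *\<^sub>v x) + WL1 *\<^sub>v bb) + bL1"
      unfolding relu_net_def hW mult_add_distrib_mat_vec[OF WL1 Wx bc] ..
    also have "\<dots> = WL1 *\<^sub>v (W *\<^sub>v x) + (WL1 *\<^sub>v bb + bL1)"
      by (rule assoc_add_vec[OF WWx WLb bL1])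
    also have "\<dots> = WL1 *\<^sub>v (W *\<^sub>v x)" unfolding eqb by (rule right_zero_vec[OF WWx])
    also have "\<dots> = K *\<^sub>v x" unfolding K_def by (rule assoc_mult_mat_vec[OF WL1 Wc dx, symmetric])
    finally have "relu_net ls WL1 bL1 x = K *\<^sub>v x" .
    then show ?thesis unfolding f_def closed_loop_def lin_def by simp
  qed
  have fR: "f y \<in> R_as" if "y \<in> R_as" for y
    using inv that unfolding admissible_ci_def f_def by blast
  have inR: "(f ^^ k) x0 \<in> R_as \<and> (f ^^ k) x0 = (lin ^^ k) x0" if x0: "x0 \<in> R_as" for x0 k
  proof (induction k)
    case 0 then show ?case using x0 by simp
  next
    case (Suc k)
    have h1: "(f ^^ k) x0 \<in> R_as" and h2: "(f ^^ k) x0 = (lin ^^ k) x0" using Suc.IH by blast+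
    have "(f ^^ Suc k) x0 = f ((f ^^ k) x0)" by simp
    also have "\<dots> = lin ((f ^^ k) x0)" by (rule fx[OF h1])
    also have "\<dots> = (lin ^^ Suc k) x0" using h2 by simp
    finally show ?case using fR[OF h1] by simp
  qed
  show ?thesis
  proof (intro ballI allI conjI)
    fix x0 k assume x0: "x0 \<in> R_as"
    have L: "x0 \<in> lin_region nx A B K (polyhedron nx Cx cx) (polyhedron nu Cu cu)"
      using sub x0 unfolding K_def W_def G_def by blast
    have eqk: "\<And>k. (f ^^ k) x0 = (lin ^^ k) x0" using inR[OF x0] by blast
    have L2: "(\<forall>k. (lin ^^ k) x0 \<in> polyhedron nx Cx cx) \<and> conv_zero nx (\<lambda>k. (lin ^^ k) x0)"
      using L unfolding lin_region_def lin_def Let_def by blast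
    show "(closed_loop A B ls WL1 bL1 ^^ k) x0 \<in> polyhedron nx Cx cx"
      using L2 eqk unfolding f_def by metis
    show "relu_net ls WL1 bL1 ((closed_loop A B ls WL1 bL1 ^^ k) x0) \<in> polyhedron nu Cu cu"
      using inv inR[OF x0] unfolding admissible_ci_def f_def by blast
    have "(\<lambda>k. (closed_loop A B ls WL1 bL1 ^^ k) x0) = (\<lambda>k. (lin ^^ k) x0)"
      using eqk unfolding f_def by (rule ext)
    then show "conv_zero nx (\<lambda>k. (closed_loop A B ls WL1 bL1 ^^ k) x0)"
      using L2 by simp
  qed
qed

end
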